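(* Let $R$ be a commutative ring with identity such that $4\le \gamma_t(\Gamma(R))<\infty$. Then $\gamma(\Gamma(R))=\gamma_t(\Gamma(R))$.
   Context: All rings are commutative with identity. The zero-divisor graph $\Gamma(R)$ has vertex set $Z(R)^*$ (nonzero zero-divisors); distinct $r,s$ are adjacent iff $rs=0$, and $x$ is adjacent to itself iff $x^2=0$. A dominating set is $X\subseteq Z(R)^*$ such that every vertex not in $X$ is adjacent to some element of $X$; a total dominating set is $X$ such that every vertex (including those in $X$) is adjacent to some element of $X$ (self-adjacency counts). $\gamma,\gamma_t$ are the respective minimum cardinalities. *)

theory Defs
  imports Main "HOL-Library.Extended_Nat"
begin

definition zd_vertices :: "'a::comm_ring_1 set" where
  "zd_vertices = {x. x \<noteq> 0 \<and> (\<exists>y. y \<noteq> 0 \<and> x * y = 0)}"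

definition zd_adj :: "'a::comm_ring_1 \<Rightarrow> 'a \<Rightarrow> bool" where
  "zd_adj r s = (if r = s then r * r = 0 else r * s = 0)"

definition zd_dominating :: "'a::comm_ring_1 set \<Rightarrow> bool" where
  "zd_dominating X \<longleftrightarrow> X \<subseteq> zd_vertices \<and>
     (\<forall>v \<in> zd_vertices - X. \<exists>x \<in> X. zd_adj v x)"

definition zd_total_dominating :: "'a::comm_ring_1 set \<Rightarrow> bool" where
  "zd_total_dominating X \<longleftrightarrow> X \<subseteq> zd_vertices \<and>
     (\<forall>v \<in> zd_vertices. \<exists>x \<in> X. zd_adj v x)"

text \<open>Domination numbers as extended naturals (infinity if no finite such set exists).\<close>
definition zd_gamma :: "'a::comm_ring_1 itself \<Rightarrow> enat" where
  "zd_gamma _ = (INF X \<in> {X :: 'a set. zd_dominating X \<and> finite X}. enat (card X))"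

definition zd_gamma_t :: "'a::comm_ring_1 itself \<Rightarrow> enat" where
  "zd_gamma_t _ = (INF X \<in> {X :: 'a set. zd_total_dominating X \<and> finite X}. enat (card X))"

end

theory Submission
  imports Defs
begin

definition isol :: "'a::comm_ring_1 set \<Rightarrow> 'a set" where
  "isol D = {d \<in> D. \<not> (\<exists>x\<in>D. zd_adj d x)}"

lemma adj_sym: "zd_adj (a::'a::comm_ring_1) b = zd_adj b a"
  unfolding zd_adj_def by (auto simp: mult.commute)

lemma adj_mult:
  fixes v a b :: "'a::comm_ring_1"
  assumes "zd_adj v a" "a*b \<noteq> 0" shows "zd_adj v (a*b)"
proof (cases "v = a")
  case True
  then have aa: "a*a = 0" using assms(1) by (simp add: zd_adj_def)
  show ?thesis
  proof (cases "a = a*b")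
    case True
    then show ?thesis using aa True \<open>v = a\<close> by (simp add: zd_adj_def)
  next
    case False
    have "a*(a*b) = (a*a)*b" by (simp add: mult.assoc)
    then show ?thesis using aa False \<open>v = a\<close> by (simp add: zd_adj_def)
  qed
next
  case False
  then have va: "v*a = 0" using assms(1) by (simp add: zd_adj_def)
  have e: "v*(a*b) = (v*a)*b" by (simp add: mult.assoc)
  show ?thesis
  proof (cases "v = a*b")
    case True
    then show ?thesis using va e by (simp add: zd_adj_def)
  next
    case False
    then show ?thesis using va e by (simp add: zd_adj_def)
  qed
qed

lemma inV: "(u::'a::comm_ring_1) \<noteq> 0 \<Longrightarrow> a \<noteq> 0 \<Longrightarrow> u*a = 0 \<Longrightarrow> u \<in> zd_vertices"
  unfolding zd_vertices_def by (auto simp: mult.commute)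

lemma isolD: "d \<in> isol D \<Longrightarrow> e \<in> D \<Longrightarrow> (d::'a::comm_ring_1)*e \<noteq> 0"
  unfolding isol_def zd_adj_def by (auto split: if_splits)

lemma isol_notadj: "d \<in> isol D \<Longrightarrow> e \<in> D \<Longrightarrow> \<not> zd_adj (e::'a::comm_ring_1) d"
  unfolding isol_def using adj_sym by blast

lemma adj_zero: "(x::'a::comm_ring_1) \<noteq> y \<Longrightarrow> x*y = 0 \<Longrightarrow> zd_adj x y"
  unfolding zd_adj_def by simp

lemma total_of: "zd_dominating D \<Longrightarrow> isol D = {} \<Longrightarrow> zd_total_dominating D"
  unfolding zd_dominating_def zd_total_dominating_def isol_def by blast

lemma isol_sub: "isol D \<subseteq> D" unfolding isol_def by auto

lemma caseB:
  fixes D :: "'a::comm_ring_1 set"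
  assumes fin: "finite D" and dom: "zd_dominating D" and di: "d \<in> isol D"
    and d'D: "d' \<in> D" and dd': "d' \<noteq> d" and ann: "\<forall>z. z*d = 0 \<longrightarrow> z*d' = 0"
  shows "\<exists>D'. finite D' \<and> zd_dominating D' \<and> card D' \<le> card D \<and> isol D' \<subset> isol D
     \<and> (card D' \<ge> 2 \<or> isol D' = {})"
proof -
  have dD: "d \<in> D" using di isol_sub by blast
  have dV: "d \<in> zd_vertices" using dom dD unfolding zd_dominating_def by blast
  then obtain z where z0: "z \<noteq> 0" and zd: "d*z = 0" unfolding zd_vertices_def by blast
  have dd: "d*d \<noteq> 0" using isolD[OF di dD] .
  have zdd: "z \<noteq> d" using zd dd by auto
  have zd': "z*d' = 0" using ann zd by (metis mult.commute)
  have dd'0: "d*d' \<noteq> 0" using isolD[OF di d'D] .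
  have znd': "z \<noteq> d'" using zd dd'0 by (auto simp: mult.commute)
  have zadj: "zd_adj z d'" using adj_zero[OF znd' zd'] .
  have dz: "zd_adj d z" using adj_zero[OF zdd[symmetric] zd] .
  have znD: "z \<notin> D"
    using di dz unfolding isol_def by blast
  have d0: "d \<noteq> 0" using dV unfolding zd_vertices_def by blast
  have zV: "z \<in> zd_vertices" using inV[OF z0 d0] zd by (simp add: mult.commute)
  define D' where "D' = insert z (D - {d})"
  have fin': "finite D'" using fin unfolding D'_def by simp
  have card': "card D' = card D" unfolding D'_def using fin znD dD
    by (simp add: card.insert_remove) (metis Suc_pred card_gt_0_iff empty_iff)
  have d'D': "d' \<in> D'" unfolding D'_def using d'D dd' by simp
  have dom': "zd_dominating D'"
    unfolding zd_dominating_def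
  proof
    show "D' \<subseteq> zd_vertices" using dom zV unfolding D'_def zd_dominating_def by blast
    show "\<forall>v\<in>zd_vertices - D'. \<exists>x\<in>D'. zd_adj v x"
    proof
      fix v assume v: "v \<in> zd_vertices - D'"
      show "\<exists>x\<in>D'. zd_adj v x"
      proof (cases "v = d")
        case True then show ?thesis using dz unfolding D'_def by blast
      next
        case False
        then have vD: "v \<in> zd_vertices - D" using v unfolding D'_def by auto
        then obtain f where fD: "f \<in> D" and vf: "zd_adj v f" using dom unfolding zd_dominating_def by blast
        show ?thesis
        proof (cases "f = d")
          case True
          have "v \<noteq> d" using False .
          then have "v*d = 0" using vf True unfolding zd_adj_def by simp
          then have "v*d' = 0" using ann by blast
          moreover have "v \<noteq> d'" using vD d'D by blast
          ultimately show ?thesis using adj_zero d'D' by blast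
        next
          case False then show ?thesis using fD vf unfolding D'_def by blast
        qed
      qed
    qed
  qed
  have isol': "isol D' \<subseteq> isol D - {d}"
  proof
    fix e assume e: "e \<in> isol D'"
    have eD': "e \<in> D'" using e isol_sub by blast
    have ez: "e \<noteq> z" using e zadj d'D' unfolding isol_def by blast
    then have eD: "e \<in> D" "e \<noteq> d" using eD' unfolding D'_def by auto
    have "\<not> (\<exists>f\<in>D. zd_adj e f)"
    proof
      assume "\<exists>f\<in>D. zd_adj e f"
      then obtain f where fD: "f \<in> D" and ef: "zd_adj e f" by blast
      have "f \<noteq> d" using isol_notadj[OF di eD(1)] ef by blast
      then have "f \<in> D'" using fD unfolding D'_def by blast
      then show False using e ef unfolding isol_def by blast
    qed
    then show "e \<in> isol D - {d}" using eD unfolding isol_def by blast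
  qed
  have c2: "card D' \<ge> 2 \<or> isol D' = {}"
  proof (cases "isol D' = {}")
    case False
    then obtain e where e: "e \<in> isol D'" by blast
    have "e \<noteq> z" using e zadj d'D' unfolding isol_def by blast
    moreover have "e \<in> D'" "z \<in> D'" using e isol_sub unfolding D'_def by auto
    ultimately have "{e, z} \<subseteq> D'" by auto
    then have "card {e, z} \<le> card D'" using fin' card_mono by blast
    then show ?thesis using \<open>e \<noteq> z\<close> by simp
  qed simp
  show ?thesis using fin' dom' card' isol' c2 di by (intro exI[of _ D']) auto
qed

lemma caseC:
  fixes D :: "'a::comm_ring_1 set"
  assumes fin: "finite D" and dom: "zd_dominating D" and di: "d \<in> isol D"
    and d'D: "d' \<in> D" and d'ni: "d' \<notin> isol D" and zd: "z*d = 0" and xz: "d'*z \<noteq> 0"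
  shows "\<exists>D'. finite D' \<and> zd_dominating D' \<and> card D' \<le> card D \<and> isol D' \<subset> isol D
     \<and> (card D' \<ge> 2 \<or> isol D' = {})"
proof -
  define x where "x = d'*z"
  have dD: "d \<in> D" using di isol_sub by blast
  have dV: "d \<in> zd_vertices" using dom dD unfolding zd_dominating_def by blast
  have d0: "d \<noteq> 0" using dV unfolding zd_vertices_def by blast
  have dd: "d*d \<noteq> 0" using isolD[OF di dD] .
  have dd': "d \<noteq> d'" using di d'ni by blast
  have xd: "x*d = 0" unfolding x_def using zd by (simp add: mult.assoc)
  have x0: "x \<noteq> 0" unfolding x_def using xz .
  have xV: "x \<in> zd_vertices" using inV[OF x0 d0 xd] .
  have xnd: "x \<noteq> d" using xd dd by auto
  have xadj: "zd_adj x d" using adj_zero[OF xnd xd] .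
  have dx: "zd_adj d x" using xadj adj_sym by blast
  have xnD: "x \<notin> D" using di dx unfolding isol_def by blast
  define D' where "D' = insert x (D - {d'})"
  have fin': "finite D'" using fin unfolding D'_def by simp
  have card': "card D' = card D" unfolding D'_def using fin xnD d'D
    by (simp add: card.insert_remove) (metis Suc_pred card_gt_0_iff empty_iff)
  have dD': "d \<in> D'" unfolding D'_def using dD dd' by simp
  have xD': "x \<in> D'" unfolding D'_def by simp
  have dom': "zd_dominating D'"
    unfolding zd_dominating_def
  proof
    show "D' \<subseteq> zd_vertices" using dom xV unfolding D'_def zd_dominating_def by blast
    show "\<forall>v\<in>zd_vertices - D'. \<exists>x\<in>D'. zd_adj v x"
    proof
      fix v assume v: "v \<in> zd_vertices - D'"
      show "\<exists>x\<in>D'. zd_adj v x"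
      proof (cases "v = d'")
        case True
        obtain f where fD: "f \<in> D" and df: "zd_adj d' f" using d'ni d'D unfolding isol_def by blast
        show ?thesis
        proof (cases "f = d'")
          case True
          then have "d'*d' = 0" using df unfolding zd_adj_def by simp
          then have "d'*x = 0" unfolding x_def by (simp add: mult.assoc[symmetric])
          moreover have "d' \<noteq> x" using xnD d'D by blast
          ultimately show ?thesis using adj_zero xD' \<open>v = d'\<close> by blast
        next
          case False then show ?thesis using fD df \<open>v = d'\<close> unfolding D'_def by blast
        qed
      next
        case False
        then have vD: "v \<in> zd_vertices - D" using v unfolding D'_def by auto
        then obtain f where fD: "f \<in> D" and vf: "zd_adj v f" using dom unfolding zd_dominating_def by blast
        show ?thesis
        proof (cases "f = d'")
          case True
          then have "zd_adj v x" unfolding x_def using adj_mult[OF _ xz] vf by blast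
          then show ?thesis using xD' by blast
        next
          case False then show ?thesis using fD vf unfolding D'_def by blast
        qed
      qed
    qed
  qed
  have isol': "isol D' \<subseteq> isol D - {d}"
  proof
    fix e assume e: "e \<in> isol D'"
    have eD': "e \<in> D'" using e isol_sub by blast
    have ex: "e \<noteq> x" using e xadj dD' unfolding isol_def by blast
    have ed: "e \<noteq> d" using e dx xD' unfolding isol_def by blast
    then have eD: "e \<in> D" using eD' ex unfolding D'_def by auto
    have "\<not> (\<exists>f\<in>D. zd_adj e f)"
    proof
      assume "\<exists>f\<in>D. zd_adj e f"
      then obtain f where fD: "f \<in> D" and ef: "zd_adj e f" by blast
      show False
      proof (cases "f = d'")
        case True
        then have "zd_adj e x" unfolding x_def using adj_mult[OF _ xz] ef by blast
        then show False using e xD' unfolding isol_def by blast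
      next
        case False
        then have "f \<in> D'" using fD unfolding D'_def by blast
        then show False using e ef unfolding isol_def by blast
      qed
    qed
    then show "e \<in> isol D - {d}" using eD ed unfolding isol_def by blast
  qed
  have c2: "card D' \<ge> 2 \<or> isol D' = {}"
  proof (cases "isol D' = {}")
    case False
    then obtain e where e: "e \<in> isol D'" by blast
    have "e \<noteq> x" using e xadj dD' unfolding isol_def by blast
    moreover have "e \<in> D'" using e isol_sub by auto
    ultimately have "{e, x} \<subseteq> D'" using xD' by auto
    then have "card {e, x} \<le> card D'" using fin' card_mono by blast
    then show ?thesis using \<open>e \<noteq> x\<close> by simp
  qed simp
  show ?thesis using fin' dom' card' isol' c2 di by (intro exI[of _ D']) auto
qed

lemma caseP:
  fixes D :: "'a::comm_ring_1 set"
  assumes fin: "finite D" and dom: "zd_dominating D" and di: "d \<in> isol D"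
    and d'i: "d' \<in> isol D" and dd': "d \<noteq> d'"
    and zd: "z*d = 0" and xz: "d'*z \<noteq> 0" and wd: "w*d' = 0" and yw: "d*w \<noteq> 0"
  shows "\<exists>D'. finite D' \<and> zd_dominating D' \<and> card D' \<le> card D \<and> isol D' \<subset> isol D
     \<and> (card D' \<ge> 2 \<or> isol D' = {})"
proof -
  define x where "x = d'*z"
  define y where "y = d*w"
  have dD: "d \<in> D" using di isol_sub by blast
  have d'D: "d' \<in> D" using d'i isol_sub by blast
  have dV: "d \<in> zd_vertices" using dom dD unfolding zd_dominating_def by blast
  have d0: "d \<noteq> 0" using dV unfolding zd_vertices_def by blast
  have d'V: "d' \<in> zd_vertices" using dom d'D unfolding zd_dominating_def by blast
  have d'0: "d' \<noteq> 0" using d'V unfolding zd_vertices_def by blast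
  have dd: "d*d \<noteq> 0" using isolD[OF di dD] .
  have d'd': "d'*d' \<noteq> 0" using isolD[OF d'i d'D] .
  have xd: "x*d = 0" unfolding x_def using zd by (simp add: mult.assoc)
  have yd': "y*d' = 0" unfolding y_def using wd by (simp add: mult.assoc)
  have x0: "x \<noteq> 0" unfolding x_def using xz .
  have y0: "y \<noteq> 0" unfolding y_def using yw .
  have xV: "x \<in> zd_vertices" using inV[OF x0 d0 xd] .
  have yV: "y \<in> zd_vertices" using inV[OF y0 d'0 yd'] .
  have xnd: "x \<noteq> d" using xd dd by auto
  have ynd': "y \<noteq> d'" using yd' d'd' by auto
  have dx: "zd_adj d x" using adj_zero[OF xnd xd] adj_sym by blast
  have d'y: "zd_adj d' y" using adj_zero[OF ynd' yd'] adj_sym by blast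
  have xnD: "x \<notin> D" using di dx unfolding isol_def by blast
  have ynD: "y \<notin> D" using d'i d'y unfolding isol_def by blast
  have xy0: "x*y = 0" unfolding x_def y_def
  proof -
    have "d' * z * (d * w) = d' * (z * d) * w" by (simp add: algebra_simps)
    then show "d' * z * (d * w) = 0" using zd by simp
  qed
  have xy: "zd_adj x y" using xy0 unfolding zd_adj_def by auto
  have yx: "zd_adj y x" using xy adj_sym by blast
  define D' where "D' = insert x (insert y (D - {d, d'}))"
  have fin': "finite D'" using fin unfolding D'_def by simp
  have "card D' \<le> card (D - {d,d'}) + 2"
  proof -
    have f: "finite (D - {d,d'})" using fin by simp
    have "card (insert y (D - {d,d'})) \<le> Suc (card (D - {d,d'}))" using f by (simp add: card_insert_if)
    moreover have "card D' \<le> Suc (card (insert y (D - {d,d'})))" unfolding D'_def using f by (simp add: card_insert_if)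
    ultimately show ?thesis by simp
  qed
  moreover have "card (D - {d,d'}) + 2 = card D"
  proof -
    have "card (D - {d,d'}) = card D - card {d,d'}" using fin dD d'D
      by (simp add: card_Diff_subset)
    moreover have "card {d,d'} = 2" using dd' by simp
    moreover have "card {d,d'} \<le> card D" using fin dD d'D card_mono by (metis empty_subsetI insert_subset)
    ultimately show ?thesis by simp
  qed
  ultimately have card': "card D' \<le> card D" by simp
  have xD': "x \<in> D'" and yD': "y \<in> D'" unfolding D'_def by simp_all
  have dom': "zd_dominating D'"
    unfolding zd_dominating_def
  proof
    show "D' \<subseteq> zd_vertices" using dom xV yV unfolding D'_def zd_dominating_def by blast
    show "\<forall>v\<in>zd_vertices - D'. \<exists>x\<in>D'. zd_adj v x"
    proof
      fix v assume v: "v \<in> zd_vertices - D'"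
      show "\<exists>x\<in>D'. zd_adj v x"
      proof (cases "v = d \<or> v = d'")
        case True
        then show ?thesis using dx d'y xD' yD' by blast
      next
        case False
        then have vD: "v \<in> zd_vertices - D" using v unfolding D'_def by auto
        then obtain f where fD: "f \<in> D" and vf: "zd_adj v f" using dom unfolding zd_dominating_def by blast
        show ?thesis
        proof (cases "f = d'")
          case True
          then have "zd_adj v x" unfolding x_def using adj_mult[OF _ xz] vf by blast
          then show ?thesis using xD' by blast
        next
          case False
          show ?thesis
          proof (cases "f = d")
            case True
            then have "zd_adj v y" unfolding y_def using adj_mult[OF _ yw] vf by blast
            then show ?thesis using yD' by blast
          next
            case False
            then show ?thesis using fD vf \<open>f \<noteq> d'\<close> unfolding D'_def by blast
          qed
        qed
      qed
    qed
  qed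
  have isol': "isol D' \<subseteq> isol D - {d}"
  proof
    fix e assume e: "e \<in> isol D'"
    have eD': "e \<in> D'" using e isol_sub by blast
    have ex: "e \<noteq> x" using e xy yD' unfolding isol_def by blast
    have ey: "e \<noteq> y" using e yx xD' unfolding isol_def by blast
    have eD: "e \<in> D" "e \<noteq> d" "e \<noteq> d'" using eD' ex ey unfolding D'_def by auto
    have "\<not> (\<exists>f\<in>D. zd_adj e f)"
    proof
      assume "\<exists>f\<in>D. zd_adj e f"
      then obtain f where fD: "f \<in> D" and ef: "zd_adj e f" by blast
      have "f \<noteq> d" using isol_notadj[OF di eD(1)] ef by blast
      moreover have "f \<noteq> d'" using isol_notadj[OF d'i eD(1)] ef by blast
      ultimately have "f \<in> D'" using fD unfolding D'_def by blast
      then show False using e ef unfolding isol_def by blast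
    qed
    then show "e \<in> isol D - {d}" using eD unfolding isol_def by blast
  qed
  have c2: "card D' \<ge> 2 \<or> isol D' = {}"
  proof (cases "isol D' = {}")
    case False
    then obtain e where e: "e \<in> isol D'" by blast
    have "e \<noteq> x" using e xy yD' unfolding isol_def by blast
    moreover have "e \<in> D'" using e isol_sub by auto
    ultimately have "{e, x} \<subseteq> D'" using xD' by auto
    then have "card {e, x} \<le> card D'" using fin' card_mono by blast
    then show ?thesis using \<open>e \<noteq> x\<close> by simp
  qed simp
  show ?thesis using fin' dom' card' isol' c2 di by (intro exI[of _ D']) auto
qed

lemma step:
  fixes D :: "'a::comm_ring_1 set"
  assumes fin: "finite D" and dom: "zd_dominating D" and c: "card D \<ge> 2" and di: "d \<in> isol D"
  shows "\<exists>D'. finite D' \<and> zd_dominating D' \<and> card D' \<le> card D \<and> isol D' \<subset> isol D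
     \<and> (card D' \<ge> 2 \<or> isol D' = {})"
proof (cases "\<exists>d'\<in>D-{d}. \<forall>z. z*d = 0 \<longrightarrow> z*d' = 0")
  case True
  then obtain d' where "d' \<in> D" "d' \<noteq> d" "\<forall>z. z*d = 0 \<longrightarrow> z*d' = 0" by blast
  then show ?thesis using caseB[OF fin dom di] by blast
next
  case False
  have dD: "d \<in> D" using di isol_sub by blast
  have "D - {d} \<noteq> {}"
  proof
    assume "D - {d} = {}"
    then have "D \<subseteq> {d}" by blast
    then have "card D \<le> card {d}" using card_mono[of "{d}" D] by blast
    then have "card D \<le> 1" by simp
    then show False using c by simp
  qed
  then obtain d' where d'D: "d' \<in> D" and dd': "d' \<noteq> d" by blast
  then obtain z where zd: "z*d = 0" and zd': "z*d' \<noteq> 0" using False by blast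
  have xz: "d'*z \<noteq> 0" using zd' by (simp add: mult.commute)
  show ?thesis
  proof (cases "d' \<in> isol D")
    case False
    show ?thesis by (rule caseC[OF fin dom di d'D False zd xz])
  next
    case d'i: True
    show ?thesis
    proof (cases "\<forall>w. w*d' = 0 \<longrightarrow> w*d = 0")
      case True
      obtain D' where D': "finite D'" "zd_dominating D'" "card D' \<le> card D" "isol D' \<subset> isol D"
        "card D' \<ge> 2 \<or> isol D' = {}"
        using caseB[OF fin dom d'i dD dd'[symmetric] True] by blast
      then show ?thesis by blast
    next
      case False
      then obtain w where wd: "w*d' = 0" and wd2: "w*d \<noteq> 0" by blast
      have yw: "d*w \<noteq> 0" using wd2 by (simp add: mult.commute)
      show ?thesis by (rule caseP[OF fin dom di d'i dd'[symmetric] zd xz wd yw])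
    qed
  qed
qed

lemma main:
  fixes D :: "'a::comm_ring_1 set"
  shows "finite D \<Longrightarrow> zd_dominating D \<Longrightarrow> card D \<ge> 2 \<or> isol D = {} \<Longrightarrow>
    \<exists>T :: 'a set. zd_total_dominating T \<and> finite T \<and> card T \<le> card D"
proof (induction "card (isol D)" arbitrary: D rule: less_induct)
  case (less D)
  show ?case
  proof (cases "isol D = {}")
    case True
    show ?thesis using total_of[OF less.prems(2) True] less.prems(1) by (intro exI[of _ D]) auto
  next
    case False
    then have c: "card D \<ge> 2" using less.prems by blast
    obtain d where di: "d \<in> isol D" using False by blast
    obtain D' where D': "finite D'" "zd_dominating D'" "card D' \<le> card D" "isol D' \<subset> isol D"
        "card D' \<ge> 2 \<or> isol D' = {}"
      using step[OF less.prems(1,2) c di] by blast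
    have "finite (isol D)" using less.prems(1) isol_sub finite_subset by blast
    then have "card (isol D') < card (isol D)" using D'(4) psubset_card_mono by blast
    then obtain T :: "'a set" where "zd_total_dominating T" "finite T" "card T \<le> card D'"
      using less.hyps[OF _ D'(1,2,5)] by blast
    then show ?thesis using D'(3) by (intro exI[of _ T]) auto
  qed
qed

lemma total_dom: "zd_total_dominating X \<Longrightarrow> zd_dominating X"
  unfolding zd_total_dominating_def zd_dominating_def by blast

lemma enat_INF_attained:
  assumes "(INF X\<in>S. enat (f X)) < \<infinity>"
  shows "\<exists>X\<in>S. enat (f X) = (INF X\<in>S. enat (f X))"
proof -
  have ne: "(\<lambda>X. enat (f X)) ` S \<noteq> {}" using assms by (auto simp: top_enat_def[symmetric])
  have "(INF X\<in>S. enat (f X)) = (LEAST x. x \<in> (\<lambda>X. enat (f X)) ` S)"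
    using ne by (simp add: Inf_enat_def)
  moreover have "(LEAST x. x \<in> (\<lambda>X. enat (f X)) ` S) \<in> (\<lambda>X. enat (f X)) ` S"
    using ne by (meson LeastI_ex ex_in_conv)
  ultimately show ?thesis by auto
qed

theorem theorem4p2:
  fixes R :: "'a::comm_ring_1 itself"
  assumes "4 \<le> zd_gamma_t R" and "zd_gamma_t R < \<infinity>"
  shows "zd_gamma R = zd_gamma_t R"
proof -
  have le1: "zd_gamma R \<le> zd_gamma_t R"
    unfolding zd_gamma_def zd_gamma_t_def
    by (rule INF_superset_mono) (auto intro: total_dom)
  have fin: "zd_gamma R < \<infinity>" using le1 assms(2) le_less_trans by blast
  obtain D :: "'a set" where D: "zd_dominating D" "finite D" "enat (card D) = zd_gamma R"
    using enat_INF_attained[of card "{X :: 'a set. zd_dominating X \<and> finite X}"] fin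
    unfolding zd_gamma_def by auto
  have le2: "zd_gamma_t R \<le> zd_gamma R"
  proof (cases "card D \<ge> 2 \<or> isol D = {}")
    case True
    obtain T :: "'a set" where T: "zd_total_dominating T" "finite T" "card T \<le> card D"
      using main[OF D(2,1) True] by blast
    have "zd_gamma_t R \<le> enat (card T)"
      unfolding zd_gamma_t_def using T by (intro INF_lower) auto
    also have "\<dots> \<le> enat (card D)" using T(3) by simp
    finally show ?thesis using D(3) by simp
  next
    case False
    then obtain d where di: "d \<in> isol D" by blast
    have dD: "d \<in> D" using di isol_sub by blast
    have "card D \<le> Suc 0" using False by simp
    then have Dd: "D = {d}" using dD D(2) card_le_Suc0_iff_eq by blast
    have dV: "d \<in> zd_vertices" using D(1) dD unfolding zd_dominating_def by blast
    then obtain z where z0: "z \<noteq> 0" and zd: "d*z = 0" unfolding zd_vertices_def by blast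
    have d0: "d \<noteq> 0" using dV unfolding zd_vertices_def by blast
    have dd: "d*d \<noteq> 0" using isolD[OF di dD] .
    have zdd: "z \<noteq> d" using zd dd by auto
    have zV: "z \<in> zd_vertices" using inV[OF z0 d0] zd by (simp add: mult.commute)
    have tot: "zd_total_dominating {d, z}"
      unfolding zd_total_dominating_def
    proof
      show "{d, z} \<subseteq> zd_vertices" using dV zV by blast
      show "\<forall>v\<in>(zd_vertices :: 'a set). \<exists>x\<in>{d, z}. zd_adj v x"
      proof
        fix v :: 'a assume v: "v \<in> zd_vertices"
        show "\<exists>x\<in>{d, z}. zd_adj v x"
        proof (cases "v = d")
          case True
          then show ?thesis using adj_zero[OF zdd[symmetric] zd] by blast
        next
          case False
          then have "v \<in> zd_vertices - D" using v Dd by blast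
          then obtain f where "f \<in> D" "zd_adj v f" using D(1) unfolding zd_dominating_def by blast
          then show ?thesis using Dd by blast
        qed
      qed
    qed
    have "zd_gamma_t R \<le> enat (card {d, z})"
      unfolding zd_gamma_t_def using tot by (intro INF_lower) auto
    also have "\<dots> \<le> 2" using zdd by (simp add: numeral_eq_enat)
    finally have "zd_gamma_t R \<le> 2" .
    then have "(4::enat) \<le> 2" using assms(1) order_trans by blast
    then have False by (simp add: numeral_eq_enat)
    then show ?thesis by blast
  qed
  show ?thesis using le1 le2 by simp
qed

end
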